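(* There is a primitive recursive function $\bar h:\mathbb{N}^3\to\mathbb{N}$ such that for all integers $n\ge1$, $k$, all finite nonempty $X\subseteq\mathbb{N}$, all families $(T_\rho:\rho\in 2^{\min X})$ and all $C$ satisfying (a) $|X|\ge\bar h(\min X,n,k)$, (b) each $T_\rho$ is an $X$-quasistrong tree all of whose elements are compatible with $\rho$, (c) $C:\bigcup_\rho T_\rho\to k$ is a coloring, there exist $Z\subseteq X$ with $|Z|=n$ and trees $S_\rho\subseteq T_\rho$ ($\rho\in 2^{\min X}$) such that (i) $\min Z=\min X$, and (ii) each $S_\rho$ is $Z$-quasistrong and $(C,Z)$-prehomogeneous.
   Context: Strings are finite binary strings with $\preceq$ the initial-segment order; two strings are compatible if one is an initial segment of the other; $2^i$ also denotes the set of strings of length $i$; a tree is a set of strings closed under initial segments. For finite $X=\{x_0<\dots<x_n\}$, a finite tree $T$ is $X$-quasistrong if $T\cap 2^{x_i}\ne\emptyset$ for all $i\le n$ and for each $i<n$ every $\sigma\in T\cap2^{x_i}$ has exactly two incompatible extensions in $T\cap 2^{x_{i+1}}$. A tree $T$ is $(C,X)$-prehomogeneous if there is a color $c$ such that for every $i<n$, $\sigma\in T\cap 2^{x_i}$ and $\tau\in T\cap 2^{x_{i+1}}$ with $\sigma\prec\tau$, there is $\zeta\in T$ with $\sigma\preceq\zeta\preceq\tau$ and $C(\zeta)=c$. *)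

theory Defs
  imports Main "HOL-Library.Sublist"
begin

text \<open>Strings are finite binary strings, represented as bool lists; the
initial-segment order is prefix.\<close>

definition compatible :: "bool list \<Rightarrow> bool list \<Rightarrow> bool" where
  "compatible s t \<longleftrightarrow> prefix s t \<or> prefix t s"

definition is_tree :: "bool list set \<Rightarrow> bool" where
  "is_tree T \<longleftrightarrow> (\<forall>s\<in>T. \<forall>t. prefix t s \<longrightarrow> t \<in> T)"

definition level :: "bool list set \<Rightarrow> nat \<Rightarrow> bool list set" where
  "level T i = {s\<in>T. length s = i}"

definition consec :: "nat set \<Rightarrow> nat \<Rightarrow> nat \<Rightarrow> bool" where
  "consec X x x' \<longleftrightarrow> x \<in> X \<and> x' \<in> X \<and> x < x' \<and> (\<forall>y\<in>X. \<not> (x < y \<and> y < x'))"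

definition quasistrong :: "nat set \<Rightarrow> bool list set \<Rightarrow> bool" where
  "quasistrong X T \<longleftrightarrow> finite T \<and> is_tree T \<and>
     (\<forall>x\<in>X. level T x \<noteq> {}) \<and>
     (\<forall>x x'. consec X x x' \<longrightarrow>
        (\<forall>s\<in>level T x.
           (\<exists>t1 t2. t1 \<in> level T x' \<and> t2 \<in> level T x' \<and> prefix s t1 \<and> prefix s t2 \<and>
                    \<not> compatible t1 t2 \<and>
                    {t\<in>level T x'. prefix s t} = {t1, t2})))"

definition prehomogeneous :: "(bool list \<Rightarrow> nat) \<Rightarrow> nat set \<Rightarrow> bool list set \<Rightarrow> bool" where
  "prehomogeneous C X T \<longleftrightarrow> (\<exists>c. \<forall>x x'. consec X x x' \<longrightarrow>
      (\<forall>s\<in>level T x. \<forall>t\<in>level T x'. prefix s t \<longrightarrow>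
         (\<exists>z\<in>T. prefix s z \<and> prefix z t \<and> C z = c)))"

text \<open>Primitive recursive functions of arity n, as functions on argument lists
(only values on lists of length n matter).\<close>
inductive prim_rec :: "nat \<Rightarrow> (nat list \<Rightarrow> nat) \<Rightarrow> bool" where
  pr_zero: "prim_rec n (\<lambda>_. 0)"
| pr_succ: "prim_rec 1 (\<lambda>xs. Suc (hd xs))"
| pr_proj: "i < n \<Longrightarrow> prim_rec n (\<lambda>xs. xs ! i)"
| pr_comp: "prim_rec m g \<Longrightarrow> length fs = m \<Longrightarrow> (\<forall>f\<in>set fs. prim_rec n f) \<Longrightarrow>
            prim_rec n (\<lambda>xs. g (map (\<lambda>f. f xs) fs))"
| pr_rec: "prim_rec n g \<Longrightarrow> prim_rec (Suc (Suc n)) h \<Longrightarrow>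
           prim_rec (Suc n) (\<lambda>xs. rec_nat (g (tl xs)) (\<lambda>y r. h (r # y # tl xs)) (hd xs))"

definition primrec3 :: "(nat \<Rightarrow> nat \<Rightarrow> nat \<Rightarrow> nat) \<Rightarrow> bool" where
  "primrec3 h \<longleftrightarrow> (\<exists>f. prim_rec 3 f \<and> (\<forall>a b c. h a b c = f [a, b, c]))"

end

theory Submission
  imports Defs
begin

definition PR :: "nat \<Rightarrow> (nat list \<Rightarrow> nat) \<Rightarrow> bool" where
  "PR n g \<longleftrightarrow> (\<exists>f. prim_rec n f \<and> (\<forall>xs. length xs = n \<longrightarrow> f xs = g xs))"

lemma PR_cong: "PR n f \<Longrightarrow> (\<And>xs. length xs = n \<Longrightarrow> g xs = f xs) \<Longrightarrow> PR n g"
  unfolding PR_def by metis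

lemma PR_zero: "PR n (\<lambda>_. 0)"
  unfolding PR_def using pr_zero by blast

lemma PR_succ: "PR 1 (\<lambda>xs. Suc (xs ! 0))"
  unfolding PR_def using pr_succ by (metis hd_conv_nth list.size(3) zero_neq_one)

lemma PR_proj: "i < n \<Longrightarrow> PR n (\<lambda>xs. xs ! i)"
  unfolding PR_def using pr_proj by blast

lemma PR_list: "\<forall>f\<in>set fs. PR n f \<Longrightarrow>
   \<exists>gs. length gs = length fs \<and> (\<forall>g\<in>set gs. prim_rec n g) \<and>
        (\<forall>xs. length xs = n \<longrightarrow> map (\<lambda>f. f xs) gs = map (\<lambda>f. f xs) fs)"
proof (induction fs)
  case Nil
  then show ?case by auto
next
  case (Cons f fs)
  then obtain gs where gs: "length gs = length fs" "\<forall>g\<in>set gs. prim_rec n g"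
     "\<forall>xs. length xs = n \<longrightarrow> map (\<lambda>f. f xs) gs = map (\<lambda>f. f xs) fs" by auto
  from Cons.prems obtain g where "prim_rec n g" "\<forall>xs. length xs = n \<longrightarrow> g xs = f xs"
    unfolding PR_def by auto
  with gs show ?case by (intro exI[of _ "g # gs"]) auto
qed

lemma PR_comp: "PR m g \<Longrightarrow> length fs = m \<Longrightarrow> \<forall>f\<in>set fs. PR n f \<Longrightarrow>
   (\<And>xs. length xs = n \<Longrightarrow> F xs = g (map (\<lambda>f. f xs) fs)) \<Longrightarrow> PR n F"
proof -
  assume g: "PR m g" and l: "length fs = m" and fs: "\<forall>f\<in>set fs. PR n f"
    and F: "\<And>xs. length xs = n \<Longrightarrow> F xs = g (map (\<lambda>f. f xs) fs)"
  obtain g' where g': "prim_rec m g'" "\<forall>xs. length xs = m \<longrightarrow> g' xs = g xs"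
    using g unfolding PR_def by auto
  obtain gs where gs: "length gs = length fs" "\<forall>g\<in>set gs. prim_rec n g"
        "\<forall>xs. length xs = n \<longrightarrow> map (\<lambda>f. f xs) gs = map (\<lambda>f. f xs) fs"
    using PR_list[OF fs] by auto
  have "prim_rec n (\<lambda>xs. g' (map (\<lambda>f. f xs) gs))"
    using pr_comp[OF g'(1) _ gs(2)] gs(1) l by auto
  moreover have "\<forall>xs. length xs = n \<longrightarrow> g' (map (\<lambda>f. f xs) gs) = F xs"
    using g'(2) gs(3) F l by simp
  ultimately show ?thesis unfolding PR_def by blast
qed

lemma PR_rec: "PR n g \<Longrightarrow> PR (Suc (Suc n)) h \<Longrightarrow>
   (\<And>x ys. length ys = n \<Longrightarrow> F (x # ys) = rec_nat (g ys) (\<lambda>y r. h (r # y # ys)) x) \<Longrightarrow>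
   PR (Suc n) F"
proof -
  assume g: "PR n g" and h: "PR (Suc (Suc n)) h"
    and F: "\<And>x ys. length ys = n \<Longrightarrow> F (x # ys) = rec_nat (g ys) (\<lambda>y r. h (r # y # ys)) x"
  obtain g' where g': "prim_rec n g'" "\<forall>xs. length xs = n \<longrightarrow> g' xs = g xs"
    using g unfolding PR_def by auto
  obtain h' where h': "prim_rec (Suc (Suc n)) h'" "\<forall>xs. length xs = Suc (Suc n) \<longrightarrow> h' xs = h xs"
    using h unfolding PR_def by auto
  have "\<forall>xs. length xs = Suc n \<longrightarrow>
     rec_nat (g' (tl xs)) (\<lambda>y r. h' (r # y # tl xs)) (hd xs) = F xs"
  proof (intro allI impI)
    fix xs :: "nat list" assume "length xs = Suc n"
    then obtain x ys where xs: "xs = x # ys" and ys: "length ys = n" by (cases xs) auto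
    have "rec_nat (g' ys) (\<lambda>y r. h' (r # y # ys)) x = rec_nat (g ys) (\<lambda>y r. h (r # y # ys)) x"
      by (induction x) (auto simp: g'(2) h'(2) ys)
    then show "rec_nat (g' (tl xs)) (\<lambda>y r. h' (r # y # tl xs)) (hd xs) = F xs"
      using F[OF ys] xs by simp
  qed
  then show ?thesis using pr_rec[OF g'(1) h'(1)] unfolding PR_def by blast
qed

lemma PR_add: "PR 2 (\<lambda>xs. xs ! 0 + xs ! 1)"
proof -
  have g: "PR 1 (\<lambda>xs. xs ! 0)" by (rule PR_proj) simp
  have h: "PR (Suc (Suc 1)) (\<lambda>zs. Suc (zs ! 0))"
    by (rule PR_comp[OF PR_succ, of "[\<lambda>zs. zs ! 0]"]) (auto intro: PR_proj)
  have "PR (Suc 1) (\<lambda>xs. xs ! 0 + xs ! 1)"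
    by (rule PR_rec[OF g h]) (induct_tac x, auto)
  then show ?thesis by (simp add: numeral_2_eq_2)
qed

lemma PR_mul: "PR 2 (\<lambda>xs. xs ! 0 * xs ! 1)"
proof -
  have h: "PR (Suc (Suc 1)) (\<lambda>zs. zs ! 0 + zs ! 2)"
    by (rule PR_comp[OF PR_add, of "[\<lambda>zs. zs ! 0, \<lambda>zs. zs ! 2]"]) (auto intro: PR_proj)
  have "PR (Suc 1) (\<lambda>xs. xs ! 0 * xs ! 1)"
    by (rule PR_rec[OF PR_zero h]) (induct_tac x, auto simp: numeral_2_eq_2)
  then show ?thesis by (simp add: numeral_2_eq_2)
qed

lemma PR_pow2: "PR 1 (\<lambda>xs. 2 ^ (xs ! 0))"
proof -
  have one: "PR 0 (\<lambda>_. 1)"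
    by (rule PR_comp[OF PR_succ, of "[\<lambda>_. 0]"]) (auto intro: PR_zero)
  have h: "PR (Suc (Suc 0)) (\<lambda>zs. zs ! 0 + zs ! 0)"
    by (rule PR_comp[OF PR_add, of "[\<lambda>zs. zs ! 0, \<lambda>zs. zs ! 0]"]) (auto intro: PR_proj)
  have "PR (Suc 0) (\<lambda>xs. 2 ^ (xs ! 0))"
    by (rule PR_rec[OF one h]) (induct_tac x, auto)
  then show ?thesis by simp
qed

fun ff :: "nat \<Rightarrow> nat \<Rightarrow> nat" where
  "ff 0 n = 1"
| "ff (Suc k) n = n * (ff k n + 1)"

lemma PR_ff: "PR 2 (\<lambda>xs. ff (xs ! 0) (xs ! 1))"
proof -
  have one: "PR 1 (\<lambda>_. 1)"
    by (rule PR_comp[OF PR_succ, of "[\<lambda>_. 0]"]) (auto intro: PR_zero)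
  have s: "PR (Suc (Suc 1)) (\<lambda>zs. Suc (zs ! 0))"
    by (rule PR_comp[OF PR_succ, of "[\<lambda>zs. zs ! 0]"]) (auto intro: PR_proj)
  have h: "PR (Suc (Suc 1)) (\<lambda>zs. zs ! 2 * Suc (zs ! 0))"
    by (rule PR_comp[OF PR_mul, of "[\<lambda>zs. zs ! 2, \<lambda>zs. Suc (zs ! 0)]"]) (auto intro: PR_proj s[simplified])
  have "PR (Suc 1) (\<lambda>xs. ff (xs ! 0) (xs ! 1))"
    by (rule PR_rec[OF one h]) (induct_tac x, auto simp: numeral_2_eq_2)
  then show ?thesis by (simp add: numeral_2_eq_2)
qed

lemma PR_iter: "PR 3 (\<lambda>xs. (ff (xs ! 2) ^^ (xs ! 0)) (xs ! 1))"
proof -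
  have g: "PR 2 (\<lambda>xs. xs ! 0)" by (rule PR_proj) simp
  have h: "PR (Suc (Suc 2)) (\<lambda>zs. ff (zs ! 3) (zs ! 0))"
    by (rule PR_comp[OF PR_ff, of "[\<lambda>zs. zs ! 3, \<lambda>zs. zs ! 0]"]) (auto intro: PR_proj)
  have "PR (Suc 2) (\<lambda>xs. (ff (xs ! 2) ^^ (xs ! 0)) (xs ! 1))"
    by (rule PR_rec[OF g h]) (induct_tac x, auto simp: numeral_2_eq_2 numeral_3_eq_3)
  then show ?thesis by (simp add: numeral_3_eq_3 numeral_2_eq_2)
qed

definition hb :: "nat \<Rightarrow> nat \<Rightarrow> nat \<Rightarrow> nat" where
  "hb a n k = (ff k ^^ (2 ^ a)) n"

lemma primrec3_hb: "primrec3 hb"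
proof -
  have p: "PR 3 (\<lambda>xs. 2 ^ (xs ! 0))"
    by (rule PR_comp[OF PR_pow2, of "[\<lambda>xs. xs ! 0]"]) (auto intro: PR_proj)
  have "PR 3 (\<lambda>xs. hb (xs ! 0) (xs ! 1) (xs ! 2))"
    by (rule PR_comp[OF PR_iter, of "[\<lambda>xs. 2 ^ (xs ! 0), \<lambda>xs. xs ! 1, \<lambda>xs. xs ! 2]"])
       (auto simp: hb_def intro: PR_proj p)
  then obtain f where "prim_rec 3 f" "\<forall>xs. length xs = 3 \<longrightarrow> f xs = hb (xs ! 0) (xs ! 1) (xs ! 2)"
    unfolding PR_def by auto
  then show ?thesis unfolding primrec3_def by (intro exI[of _ f]) auto
qed

definition prehom_c :: "(bool list \<Rightarrow> nat) \<Rightarrow> nat \<Rightarrow> nat set \<Rightarrow> bool list set \<Rightarrow> bool" where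
  "prehom_c C c Z S \<longleftrightarrow> (\<forall>x x'. consec Z x x' \<longrightarrow>
      (\<forall>s\<in>level S x. \<forall>t\<in>level S x'. prefix s t \<longrightarrow> (\<exists>z. prefix s z \<and> prefix z t \<and> C z = c)))"

lemma level_iff[simp]: "s \<in> level T x \<longleftrightarrow> s \<in> T \<and> length s = x"
  by (simp add: level_def)

lemma prefix_eq_len: "prefix s t \<Longrightarrow> length s = length t \<Longrightarrow> s = t"
  unfolding prefix_def by auto

lemma compat_le: "compatible u t \<Longrightarrow> length u \<le> length t \<Longrightarrow> prefix u t"
  unfolding compatible_def by (metis prefix_eq_len prefix_length_le le_antisym)

lemma compat_ge: "compatible u t \<Longrightarrow> length t \<le> length u \<Longrightarrow> prefix t u"
  unfolding compatible_def by (metis prefix_eq_len prefix_length_le le_antisym)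

lemma compat_same: "compatible u t \<Longrightarrow> length u = length t \<Longrightarrow> u = t"
  by (metis compat_le order_refl prefix_eq_len)

lemma tree_pref: "is_tree T \<Longrightarrow> t \<in> T \<Longrightarrow> prefix u t \<Longrightarrow> u \<in> T"
  unfolding is_tree_def by blast

lemma qsD:
  assumes "quasistrong X T"
  shows "finite T" "is_tree T" "\<And>x. x \<in> X \<Longrightarrow> level T x \<noteq> {}"
    "\<And>x x' s. consec X x x' \<Longrightarrow> s \<in> level T x \<Longrightarrow>
       \<exists>t1 t2. t1 \<in> level T x' \<and> t2 \<in> level T x' \<and> prefix s t1 \<and> prefix s t2 \<and>
                    \<not> compatible t1 t2 \<and> {t\<in>level T x'. prefix s t} = {t1, t2}"
  using assms unfolding quasistrong_def by blast+

lemma prehom_c_imp: "is_tree S \<Longrightarrow> prehom_c C c Z S \<Longrightarrow> prehomogeneous C Z S"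
  unfolding prehom_c_def prehomogeneous_def
  by (metis level_iff tree_pref)

lemma prehom_imp_c: "prehomogeneous C Z S \<Longrightarrow> \<exists>c. prehom_c C c Z S"
  unfolding prehom_c_def prehomogeneous_def by metis

lemma consec_succ:
  assumes "finite X" "x \<in> X" "y \<in> X" "x < y"
  shows "consec X x (Min {z\<in>X. x < z})" "Min {z\<in>X. x < z} \<le> y"
proof -
  let ?A = "{z\<in>X. x < z}"
  have f: "finite ?A" "?A \<noteq> {}" using assms by auto
  have "Min ?A \<in> ?A" using Min_in[OF f] .
  then show "consec X x (Min ?A)" unfolding consec_def using assms f
    by (auto dest: Min_le[OF f(1)])
  show "Min ?A \<le> y" using assms f by (auto intro: Min_le)
qed

lemma consec_pred:
  assumes "finite X" "x \<in> X" "y \<in> X" "x < y"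
  shows "consec X (Max {z\<in>X. z < y}) y" "x \<le> Max {z\<in>X. z < y}"
proof -
  let ?A = "{z\<in>X. z < y}"
  have f: "finite ?A" "?A \<noteq> {}" using assms by auto
  have "Max ?A \<in> ?A" using Max_in[OF f] .
  then show "consec X (Max ?A) y" unfolding consec_def using assms f
    by (auto dest: Max_ge[OF f(1)])
  show "x \<le> Max ?A" using assms f by (auto intro: Max_ge)
qed

lemma ext2:
  assumes qs: "quasistrong X T" and fin: "finite X"
  shows "x \<in> X \<Longrightarrow> y \<in> X \<Longrightarrow> x < y \<Longrightarrow> s \<in> level T x \<Longrightarrow>
     \<exists>t1 t2. t1 \<in> level T y \<and> t2 \<in> level T y \<and> prefix s t1 \<and> prefix s t2 \<and> t1 \<noteq> t2"
proof (induction y rule: less_induct)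
  case (less y)
  let ?p = "Max {z\<in>X. z < y}"
  have c: "consec X ?p y" and xp: "x \<le> ?p" using consec_pred[OF fin less.prems(1,2,3)] by auto
  have pX: "?p \<in> X" "?p < y" using c unfolding consec_def by auto
  obtain u where u: "u \<in> level T ?p" "prefix s u"
  proof (cases "x = ?p")
    case True then show ?thesis using that less.prems by auto
  next
    case False
    then have "x < ?p" using xp by auto
    from less.IH[OF pX(2) less.prems(1) pX(1) this less.prems(4)] that show ?thesis by blast
  qed
  from qsD(4)[OF qs c u(1)] obtain t1 t2 where
    "t1 \<in> level T y" "t2 \<in> level T y" "prefix u t1" "prefix u t2" "\<not> compatible t1 t2" by blast
  then show ?case using u(2)
    by (metis compatible_def prefix_order.order_trans prefix_order.order_refl)
qed

lemma ext1:
  assumes "quasistrong X T" "finite X" "x \<in> X" "y \<in> X" "x \<le> y" "s \<in> level T x"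
  shows "\<exists>t\<in>level T y. prefix s t"
proof (cases "x = y")
  case True then show ?thesis using assms by auto
next
  case False then show ?thesis using ext2[OF assms(1,2,3,4) _ assms(6)] assms(5) by force
qed

lemma consec_insert_max:
  assumes "finite Y" "Y \<noteq> {}" "Max Y < y" "consec (insert y Y) x x'"
  shows "consec Y x x' \<or> (x = Max Y \<and> x' = y)"
proof (cases "x' = y")
  case True
  have "x \<in> insert y Y" "x < y" using assms True unfolding consec_def by auto
  then have xY: "x \<in> Y" by auto
  have "Max Y \<in> Y" using assms by auto
  moreover have "\<forall>w\<in>insert y Y. \<not> (x < w \<and> w < x')" using assms(4) unfolding consec_def by blast
  ultimately have "\<not> (x < Max Y)" using assms(3) True by blast
  moreover have "x \<le> Max Y" using xY assms by auto
  ultimately show ?thesis using True by auto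
next
  case False
  then have "x' \<in> Y" using assms unfolding consec_def by auto
  then have "x' \<le> Max Y" using assms by auto
  moreover have "x \<in> insert y Y" "x < x'" "\<forall>w\<in>insert y Y. \<not> (x < w \<and> w < x')"
    using assms(4) unfolding consec_def by blast+
  ultimately have "x \<in> Y" using assms(3) by auto
  then show ?thesis using \<open>x' \<in> Y\<close> \<open>x < x'\<close> \<open>\<forall>w\<in>insert y Y. \<not> (x < w \<and> w < x')\<close>
    unfolding consec_def by blast
qed

lemma seg:
  assumes qs: "quasistrong X T" and fin: "finite X" and ph: "prehom_c C c X T"
    and xy: "x \<in> X" "y \<in> X" "x < y" and s: "s \<in> level T x" and t: "t \<in> level T y"
    and st: "prefix s t"
  shows "\<exists>z. prefix s z \<and> prefix z t \<and> C z = c"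
proof -
  let ?x' = "Min {z\<in>X. x < z}"
  have c: "consec X x ?x'" and le: "?x' \<le> y" using consec_succ[OF fin xy] by auto
  have xx: "x < ?x'" using c unfolding consec_def by auto
  let ?u = "take ?x' t"
  have u: "?u \<in> level T ?x'" using t le qsD(2)[OF qs] tree_pref take_is_prefix by fastforce
  have su: "prefix s ?u" using s t st xx
    by (metis prefix_length_prefix take_is_prefix level_iff length_take min_def less_imp_le le order.strict_trans2)
  obtain z where z: "prefix s z" "prefix z ?u" "C z = c" using ph c s u su unfolding prehom_c_def by blast
  have "prefix z t" using z(2) prefix_order.order_trans take_is_prefix by blast
  then show ?thesis using z by blast
qed

lemma prehom_restrict:
  assumes qs: "quasistrong X T" and fin: "finite X" and ph: "prehom_c C c X T"
    and sub: "S \<subseteq> T" and YX: "Y \<subseteq> X"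
  shows "prehom_c C c Y S"
  unfolding prehom_c_def
proof (intro allI impI ballI)
  fix x x' s t assume c: "consec Y x x'" and s: "s \<in> level S x" and t: "t \<in> level S x'" and st: "prefix s t"
  then show "\<exists>z. prefix s z \<and> prefix z t \<and> C z = c"
    using seg[OF qs fin ph, of x x' s t] sub YX unfolding consec_def by auto
qed

lemma finite_short: "finite {u::bool list. length u \<le> y}"
  using finite_lists_length_le[of "UNIV::bool set" y] by simp

lemma BE:
  assumes qs: "quasistrong Y S0" and fin: "finite Y" "Y \<noteq> {}"
    and short: "\<forall>s\<in>S0. length s \<le> Max Y" and yb: "Max Y < y" and tr: "is_tree T"
    and sub: "S0 \<subseteq> T"
    and ch: "\<forall>s\<in>level S0 (Max Y). \<exists>t1 t2. t1 \<in> level T y \<and> t2 \<in> level T y \<and>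
              prefix s t1 \<and> prefix s t2 \<and> t1 \<noteq> t2 \<and> P s t1 \<and> P s t2"
  shows "\<exists>S. S0 \<subseteq> S \<and> S \<subseteq> T \<and> quasistrong (insert y Y) S \<and> (\<forall>s\<in>S. length s \<le> y) \<and>
             (\<forall>x\<in>Y. level S x = level S0 x) \<and>
             (\<forall>s\<in>level S (Max Y). \<forall>t\<in>level S y. prefix s t \<longrightarrow> P s t)"
proof -
  let ?L = "level S0 (Max Y)"
  from ch obtain f1 f2 where f: "\<And>s. s \<in> ?L \<Longrightarrow> f1 s \<in> level T y \<and> f2 s \<in> level T y \<and>
              prefix s (f1 s) \<and> prefix s (f2 s) \<and> f1 s \<noteq> f2 s \<and> P s (f1 s) \<and> P s (f2 s)"
    by metis
  define N where "N = f1 ` ?L \<union> f2 ` ?L"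
  define S where "S = S0 \<union> {u. \<exists>t\<in>N. prefix u t}"
  have trS0: "is_tree S0" using qsD(2)[OF qs] .
  have NT: "N \<subseteq> level T y" using f unfolding N_def by auto
  have Nanc: "\<And>t. t \<in> N \<Longrightarrow> \<exists>s\<in>?L. prefix s t \<and> P s t \<and> (t = f1 s \<or> t = f2 s)"
  proof -
    fix t assume "t \<in> N"
    then obtain s where s: "s \<in> ?L" "t = f1 s \<or> t = f2 s" unfolding N_def by blast
    then show "\<exists>s\<in>?L. prefix s t \<and> P s t \<and> (t = f1 s \<or> t = f2 s)" using f[OF s(1)] by blast
  qed
  have SS0: "S0 \<subseteq> S" unfolding S_def by auto
  have ST: "S \<subseteq> T" unfolding S_def using sub NT tr tree_pref by fastforce
  have lenS: "\<forall>s\<in>S. length s \<le> y" unfolding S_def using short yb NT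
    by (auto dest!: prefix_length_le)
  have levy: "level S y = N"
  proof
    show "level S y \<subseteq> N"
    proof
      fix u assume u: "u \<in> level S y"
      then have "u \<notin> S0" using short yb by fastforce
      then obtain t where "t \<in> N" "prefix u t" using u unfolding S_def by auto
      moreover then have "length t = y" using NT by auto
      ultimately show "u \<in> N" using u prefix_eq_len by fastforce
    qed
    show "N \<subseteq> level S y" using NT unfolding S_def by fastforce
  qed
  have levx: "\<And>x. x \<le> Max Y \<Longrightarrow> level S x = level S0 x"
  proof
    fix x assume x: "x \<le> Max Y"
    show "level S x \<subseteq> level S0 x"
    proof
      fix u assume u: "u \<in> level S x"
      show "u \<in> level S0 x"
      proof (cases "u \<in> S0")
        case True then show ?thesis using u by auto
      next
        case False
        then obtain t where t: "t \<in> N" "prefix u t" using u unfolding S_def by auto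
        then obtain s where s: "s \<in> ?L" "prefix s t" using Nanc by blast
        have "prefix u s" using prefix_length_prefix[OF t(2) s(2)] u s x by auto
        then show ?thesis using s trS0 tree_pref u by auto
      qed
    qed
    show "level S0 x \<subseteq> level S x" using SS0 by auto
  qed
  have MY: "Max Y \<in> Y" using fin by auto
  have Lne: "?L \<noteq> {}" using qsD(3)[OF qs MY] .
  have qsS: "quasistrong (insert y Y) S"
    unfolding quasistrong_def
  proof (intro conjI allI impI ballI)
    show "finite S" using lenS finite_short by (metis finite_subset mem_Collect_eq subsetI)
    show "is_tree S" unfolding is_tree_def S_def using trS0 unfolding is_tree_def
      by (auto intro: prefix_order.order_trans)
    fix x assume "x \<in> insert y Y"
    then show "level S x \<noteq> {}"
    proof
      assume "x = y" then show ?thesis using levy Lne unfolding N_def by auto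
    next
      assume "x \<in> Y" then show ?thesis using levx[of x] qsD(3)[OF qs] fin by auto
    qed
  next
    fix x x' s assume c: "consec (insert y Y) x x'" and s: "s \<in> level S x"
    from consec_insert_max[OF fin yb c]
    show "\<exists>t1 t2. t1 \<in> level S x' \<and> t2 \<in> level S x' \<and> prefix s t1 \<and> prefix s t2 \<and>
                    \<not> compatible t1 t2 \<and> {t\<in>level S x'. prefix s t} = {t1, t2}"
    proof
      assume c': "consec Y x x'"
      then have "x \<in> Y" "x' \<in> Y" unfolding consec_def by auto
      then have "level S x = level S0 x" "level S x' = level S0 x'" using levx fin by auto
      then show ?thesis using qsD(4)[OF qs c'] s by simp
    next
      assume xx: "x = Max Y \<and> x' = y"
      then have sL: "s \<in> ?L" using levx s by auto
      have in1: "f1 s \<in> level S y" "f2 s \<in> level S y" using levy sL unfolding N_def by auto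
      have nc: "\<not> compatible (f1 s) (f2 s)" using f[OF sL] compat_same by auto
      have "{t\<in>level S y. prefix s t} = {f1 s, f2 s}"
      proof
        show "{t\<in>level S y. prefix s t} \<subseteq> {f1 s, f2 s}"
        proof
          fix t assume t: "t \<in> {t\<in>level S y. prefix s t}"
          have "t \<in> N" using t levy by blast
          then obtain s' where s': "s' \<in> ?L" "prefix s' t" "t = f1 s' \<or> t = f2 s'"
            using Nanc by blast
          have "s' = s" using s' sL t
            by (metis level_iff mem_Collect_eq prefix_eq_len prefix_length_prefix order_refl)
          then show "t \<in> {f1 s, f2 s}" using s' by auto
        qed
        show "{f1 s, f2 s} \<subseteq> {t\<in>level S y. prefix s t}" using in1 f[OF sL] by auto
      qed
      then show ?thesis using xx in1 nc f[OF sL] by blast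
    qed
  qed
  have Pprop: "\<forall>s\<in>level S (Max Y). \<forall>t\<in>level S y. prefix s t \<longrightarrow> P s t"
  proof (intro ballI impI)
    fix s t assume s: "s \<in> level S (Max Y)" and t: "t \<in> level S y" and st: "prefix s t"
    then have sL: "s \<in> ?L" using levx by auto
    have "t \<in> N" using t levy by blast
    then obtain s' where s': "s' \<in> ?L" "prefix s' t" "P s' t" using Nanc by blast
    have "s' = s" using s' sL st
      by (metis level_iff prefix_eq_len prefix_length_prefix order_refl)
    then show "P s t" using s' by auto
  qed
  show ?thesis using SS0 ST qsS lenS levx Pprop fin by (intro exI[of _ S]) auto
qed

lemma max_induct:
  assumes "finite Y" "Y \<noteq> {}" "\<And>a. P {a}"
    "\<And>Y y. finite Y \<Longrightarrow> Y \<noteq> {} \<Longrightarrow> Max Y < (y::nat) \<Longrightarrow> P Y \<Longrightarrow> P (insert y Y)"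
  shows "P Y"
  using assms(1,2)
proof (induction "card Y" arbitrary: Y rule: less_induct)
  case less
  show ?case
  proof (cases "card Y = 1")
    case True then show ?thesis using assms(3) by (auto simp: card_Suc_eq)
  next
    case False
    let ?Y' = "Y - {Max Y}"
    have M: "Max Y \<in> Y" using less by auto
    have "card ?Y' = card Y - 1" using M less by simp
    moreover have "card Y \<noteq> 0" using less by simp
    ultimately have ne: "?Y' \<noteq> {}" using False less by (metis card_0_eq diff_is_0_eq le_neq_implies_less less_one nat_less_le finite_Diff)
    have fin: "finite ?Y'" using less by auto
    have lt: "card ?Y' < card Y" using M less by (meson card_Diff1_less)
    have "Max ?Y' < Max Y"
    proof -
      have "Max ?Y' \<in> ?Y'" by (rule Max_in[OF fin ne])
      then have "Max ?Y' \<in> Y" "Max ?Y' \<noteq> Max Y" by auto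
      then show ?thesis using less.prems(1) Max_ge[of Y "Max ?Y'"] by linarith
    qed
    moreover have "Y = insert (Max Y) ?Y'" using M by auto
    ultimately show ?thesis using assms(4)[OF fin ne] less.hyps[OF lt fin ne] by metis
  qed
qed

lemma base_tree:
  assumes qs: "quasistrong X T" and a: "a \<in> X"
  shows "\<exists>S. S \<subseteq> T \<and> quasistrong {a} S \<and> (\<forall>s\<in>S. length s \<le> a) \<and> level S a = level T a"
proof -
  define S where "S = {u\<in>T. length u \<le> a}"
  have "quasistrong {a} S" unfolding quasistrong_def
  proof (intro conjI allI impI ballI)
    show "finite S" unfolding S_def using qsD(1)[OF qs] by auto
    show "is_tree S" unfolding is_tree_def
    proof (intro ballI allI impI)
      fix s t assume "s \<in> S" "prefix t s"
      then show "t \<in> S" unfolding S_def using qsD(2)[OF qs] tree_pref prefix_length_le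
        by (metis (mono_tags, lifting) mem_Collect_eq order_trans)
    qed
    fix x assume "x \<in> {a}"
    then show "level S x \<noteq> {}" using qsD(3)[OF qs a] unfolding S_def by auto
  next
    fix x x' s assume "consec {a} x x'"
    then have False unfolding consec_def by auto
    then show "\<exists>t1 t2. t1 \<in> level S x' \<and> t2 \<in> level S x' \<and> prefix s t1 \<and> prefix s t2 \<and>
                    \<not> compatible t1 t2 \<and> {t\<in>level S x'. prefix s t} = {t1, t2}" by blast
  qed
  moreover have "S \<subseteq> T" "\<forall>s\<in>S. length s \<le> a" "level S a = level T a"
    unfolding S_def level_def by auto
  ultimately show ?thesis by blast
qed

lemma restrict:
  assumes qs: "quasistrong X T" and fin: "finite X"
    and fY: "finite Y" and neY: "Y \<noteq> {}" and YX: "Y \<subseteq> X"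
  shows "\<exists>S. S \<subseteq> T \<and> quasistrong Y S \<and> (\<forall>s\<in>S. length s \<le> Max Y)"
  using fY neY YX
proof (induction Y rule: max_induct[consumes 2, case_names single step])
  case (single a)
  then show ?case using base_tree[OF qs, of a] by auto
next
  case (step Y y)
  have "Max Y \<in> Y" by (rule Max_in) (use step.hyps in auto)
  then have MY: "Max Y \<in> X" "y \<in> X" using step.prems(1) by auto
  have "\<exists>S. S \<subseteq> T \<and> quasistrong Y S \<and> (\<forall>s\<in>S. length s \<le> Max Y)"
    using step.IH step.prems by auto
  then obtain S0 where S0: "S0 \<subseteq> T" "quasistrong Y S0" "\<forall>s\<in>S0. length s \<le> Max Y" by auto
  have "\<forall>s\<in>level S0 (Max Y). \<exists>t1 t2. t1 \<in> level T y \<and> t2 \<in> level T y \<and>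
              prefix s t1 \<and> prefix s t2 \<and> t1 \<noteq> t2 \<and> True \<and> True"
    using ext2[OF qs fin MY step.hyps(3)] S0(1) by auto
  from BE[OF S0(2) step.hyps(1,2) S0(3) step.hyps(3) qsD(2)[OF qs] S0(1) this]
  obtain S where "S \<subseteq> T" "quasistrong (insert y Y) S" "\<forall>s\<in>S. length s \<le> y" by blast
  moreover have "Max (insert y Y) = y" using step by (simp add: Max_insert)
  ultimately show ?case by auto
qed

lemma pick:
  assumes "finite (A::nat set)" "1 \<le> m" "m \<le> card A"
  shows "\<exists>y\<in>A. card {z\<in>A. z \<le> y} = m"
  using assms
proof (induction "card A" arbitrary: A rule: less_induct)
  case less
  have ne: "A \<noteq> {}" using less.prems by auto
  have M: "Max A \<in> A" using Max_in[OF less.prems(1) ne] .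
  show ?case
  proof (cases "m = card A")
    case True
    have "{z\<in>A. z \<le> Max A} = A" using less.prems(1) by auto
    then show ?thesis using M True by metis
  next
    case False
    let ?A = "A - {Max A}"
    have c: "card ?A = card A - 1" using M less.prems(1) by simp
    have lt: "card ?A < card A" using M less.prems(1) by (meson card_Diff1_less)
    have f: "finite ?A" using less.prems(1) by simp
    have "m \<le> card ?A" using c False less.prems(3) by linarith
    then obtain y where y: "y \<in> ?A" "card {z\<in>?A. z \<le> y} = m"
      using less.hyps[OF lt f less.prems(2)] by blast
    have "y \<le> Max A" using y(1) less.prems(1) by auto
    then have "{z\<in>?A. z \<le> y} = {z\<in>A. z \<le> y}" using y(1) by auto
    then show ?thesis using y by auto
  qed
qed

definition dense :: "(bool list \<Rightarrow> nat) \<Rightarrow> nat \<Rightarrow> nat \<Rightarrow> nat set \<Rightarrow> bool list set \<Rightarrow> bool" where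
  "dense C c D X T \<longleftrightarrow> (\<forall>\<tau>\<in>T. \<forall>y\<in>X. length \<tau> \<in> X \<longrightarrow> length \<tau> \<le> y \<longrightarrow>
      D \<le> card {z\<in>X. length \<tau> \<le> z \<and> z \<le> y} \<longrightarrow>
      (\<exists>w\<in>T. length w = y \<and> prefix \<tau> w \<and> (\<exists>z. prefix \<tau> z \<and> prefix z w \<and> C z = c)))"

lemma dense_constr:
  assumes qs: "quasistrong X T" and fin: "finite X" and ne: "X \<noteq> {}"
    and dn: "dense C c D X T" and D1: "1 \<le> D"
  shows "1 + m * D \<le> card X \<Longrightarrow> \<exists>Z S. Z \<subseteq> X \<and> card Z = Suc m \<and> Min Z = Min X \<and> S \<subseteq> T \<and>
     quasistrong Z S \<and> prehom_c C c Z S \<and> (\<forall>s\<in>S. length s \<le> Max Z) \<and>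
     card {z\<in>X. z \<le> Max Z} = 1 + m * D"
proof (induction m)
  case 0
  have MX: "Min X \<in> X" using Min_in[OF fin ne] .
  obtain S where S: "S \<subseteq> T" "quasistrong {Min X} S" "\<forall>s\<in>S. length s \<le> Min X"
    using base_tree[OF qs MX] by blast
  have ph: "prehom_c C c {Min X} S" unfolding prehom_c_def consec_def by auto
  have "{z\<in>X. z \<le> Min X} = {Min X}" using MX fin by (auto intro: antisym)
  then show ?case using S ph MX by (intro exI[of _ "{Min X}"] exI[of _ S]) auto
next
  case (Suc m)
  then obtain Z S where ZS: "Z \<subseteq> X" "card Z = Suc m" "Min Z = Min X" "S \<subseteq> T"
     "quasistrong Z S" "prehom_c C c Z S" "\<forall>s\<in>S. length s \<le> Max Z"
     "card {z\<in>X. z \<le> Max Z} = 1 + m * D" by fastforce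
  have fZ: "finite Z" using ZS(1) fin finite_subset by blast
  have neZ: "Z \<noteq> {}" using ZS(2) by auto
  let ?a = "Max Z"
  have aZ: "?a \<in> Z" using Max_in[OF fZ neZ] .
  then have aX: "?a \<in> X" using ZS(1) by auto
  let ?A = "{z\<in>X. ?a < z}"
  have part: "X = {z\<in>X. z \<le> ?a} \<union> ?A" by auto
  have disj: "{z\<in>X. z \<le> ?a} \<inter> ?A = {}" by auto
  have cardX: "card X = card {z\<in>X. z \<le> ?a} + card ?A"
    using card_Un_disjoint[of "{z\<in>X. z \<le> ?a}" ?A] fin part disj by (metis (no_types, lifting) finite_Un)
  have fA: "finite ?A" using fin by auto
  have DA: "D \<le> card ?A" using cardX ZS(8) Suc.prems by simp
  obtain y where yA: "y \<in> ?A" and cy: "card {z\<in>?A. z \<le> y} = D"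
    using pick[OF fA D1 DA] by blast
  have yX: "y \<in> X" and ay: "?a < y" using yA by auto
  let ?x' = "Min {z\<in>X. ?a < z}"
  have cx: "consec X ?a ?x'" and x'y: "?x' \<le> y" using consec_succ[OF fin aX yX ay] by auto
  have x'X: "?x' \<in> X" and ax': "?a < ?x'" using cx unfolding consec_def by auto
  have eqset: "{z\<in>X. ?x' \<le> z \<and> z \<le> y} = {z\<in>?A. z \<le> y}"
  proof
    show "{z\<in>X. ?x' \<le> z \<and> z \<le> y} \<subseteq> {z\<in>?A. z \<le> y}" using ax' by auto
    show "{z\<in>?A. z \<le> y} \<subseteq> {z\<in>X. ?x' \<le> z \<and> z \<le> y}" using fA by (auto intro: Min_le)
  qed
  have ch: "\<forall>s\<in>level S ?a. \<exists>t1 t2. t1 \<in> level T y \<and> t2 \<in> level T y \<and>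
              prefix s t1 \<and> prefix s t2 \<and> t1 \<noteq> t2 \<and>
              (\<exists>z. prefix s z \<and> prefix z t1 \<and> C z = c) \<and> (\<exists>z. prefix s z \<and> prefix z t2 \<and> C z = c)"
  proof
    fix s assume s: "s \<in> level S ?a"
    then have sT: "s \<in> level T ?a" using ZS(4) by auto
    obtain u1 u2 where u: "u1 \<in> level T ?x'" "u2 \<in> level T ?x'" "prefix s u1" "prefix s u2"
        "\<not> compatible u1 u2" using qsD(4)[OF qs cx sT] by blast
    have dnu: "\<And>u. u \<in> level T ?x' \<Longrightarrow> \<exists>w\<in>T. length w = y \<and> prefix u w \<and>
          (\<exists>z. prefix u z \<and> prefix z w \<and> C z = c)"
    proof -
      fix u assume u: "u \<in> level T ?x'"
      have "D \<le> card {z\<in>X. length u \<le> z \<and> z \<le> y}" using eqset cy u by simp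
      then show "\<exists>w\<in>T. length w = y \<and> prefix u w \<and> (\<exists>z. prefix u z \<and> prefix z w \<and> C z = c)"
        using dn u x'X yX x'y unfolding dense_def by auto
    qed
    obtain w1 where w1: "w1 \<in> T" "length w1 = y" "prefix u1 w1" "\<exists>z. prefix u1 z \<and> prefix z w1 \<and> C z = c"
      using dnu[OF u(1)] by blast
    obtain w2 where w2: "w2 \<in> T" "length w2 = y" "prefix u2 w2" "\<exists>z. prefix u2 z \<and> prefix z w2 \<and> C z = c"
      using dnu[OF u(2)] by blast
    have wne: "w1 \<noteq> w2"
    proof
      assume "w1 = w2"
      then have "u1 = u2" using w1(3) w2(3) u(1,2)
        by (metis level_iff prefix_eq_len prefix_length_prefix order_refl)
      then show False using u(5) unfolding compatible_def by auto
    qed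
    have l: "w1 \<in> level T y" "w2 \<in> level T y" using w1 w2 by auto
    have p: "prefix s w1" "prefix s w2" using w1 w2 u(3,4) prefix_order.order_trans by blast+
    have e1: "\<exists>z. prefix s z \<and> prefix z w1 \<and> C z = c" using w1(4) u(3) prefix_order.order_trans by blast
    have e2: "\<exists>z. prefix s z \<and> prefix z w2 \<and> C z = c" using w2(4) u(4) prefix_order.order_trans by blast
    show "\<exists>t1 t2. t1 \<in> level T y \<and> t2 \<in> level T y \<and>
              prefix s t1 \<and> prefix s t2 \<and> t1 \<noteq> t2 \<and>
              (\<exists>z. prefix s z \<and> prefix z t1 \<and> C z = c) \<and> (\<exists>z. prefix s z \<and> prefix z t2 \<and> C z = c)"
      using l p e1 e2 wne by blast
  qed
  obtain S' where S': "S \<subseteq> S'" "S' \<subseteq> T" "quasistrong (insert y Z) S'" "\<forall>s\<in>S'. length s \<le> y"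
      "\<forall>x\<in>Z. level S' x = level S x"
      "\<forall>s\<in>level S' ?a. \<forall>t\<in>level S' y. prefix s t \<longrightarrow> (\<exists>z. prefix s z \<and> prefix z t \<and> C z = c)"
    using BE[OF ZS(5) fZ neZ ZS(7) ay qsD(2)[OF qs] ZS(4) ch] by blast
  have yZ: "y \<notin> Z" using ay fZ by (meson Max_ge leD)
  have cardZ': "card (insert y Z) = Suc (Suc m)" using yZ fZ ZS(2) by simp
  have minZ': "Min (insert y Z) = Min X"
  proof -
    have "Min Z \<le> ?a" using fZ neZ by (simp add: Min_le_iff aZ)
    then have "Min Z < y" using ay by linarith
    then show ?thesis using ZS(3) fZ neZ by (simp add: Min_insert min_def)
  qed
  have maxZ': "Max (insert y Z) = y" using fZ neZ ay by (simp add: Max_insert max_def not_le[symmetric])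
  have ph: "prehom_c C c (insert y Z) S'" unfolding prehom_c_def
  proof (intro allI impI ballI)
    fix x x' s t assume c: "consec (insert y Z) x x'" and s: "s \<in> level S' x" and t: "t \<in> level S' x'"
      and st: "prefix s t"
    from consec_insert_max[OF fZ neZ ay c]
    show "\<exists>z. prefix s z \<and> prefix z t \<and> C z = c"
    proof
      assume c': "consec Z x x'"
      then have "x \<in> Z" "x' \<in> Z" unfolding consec_def by auto
      then have "s \<in> level S x" "t \<in> level S x'" using S'(5) s t by auto
      then show ?thesis using ZS(6) c' st unfolding prehom_c_def by blast
    next
      assume "x = ?a \<and> x' = y"
      then show ?thesis using S'(6) s t st by blast
    qed
  qed
  have un: "{z\<in>X. z \<le> y} = {z\<in>X. z \<le> ?a} \<union> {z\<in>?A. z \<le> y}" using ay by auto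
  have "card ({z\<in>X. z \<le> ?a} \<union> {z\<in>?A. z \<le> y}) = card {z\<in>X. z \<le> ?a} + card {z\<in>?A. z \<le> y}"
    by (rule card_Un_disjoint) (use fin in auto)
  then have "card {z\<in>X. z \<le> y} = card {z\<in>X. z \<le> ?a} + card {z\<in>?A. z \<le> y}"
    using un by simp
  then have cardy: "card {z\<in>X. z \<le> y} = 1 + Suc m * D" using ZS(8) cy by simp
  show ?case
    using ZS(1) yX cardZ' minZ' S'(2,3,4) ph maxZ' cardy
    by (intro exI[of _ "insert y Z"] exI[of _ S']) auto
qed

lemma top_lift:
  assumes qs: "quasistrong Z' S'" and fZ: "finite Z'" and neZ: "Z' \<noteq> {}"
    and comp: "\<forall>s\<in>S'. compatible s \<tau>" and lt: "length \<tau> = Min Z'" and x0: "x0 \<le> Min Z'"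
    and ph: "prehom_c C c Z' S'"
  shows "quasistrong (insert x0 (Z' - {Min Z'})) S' \<and> prehom_c C c (insert x0 (Z' - {Min Z'})) S'"
proof -
  let ?m = "Min Z'"
  let ?Z = "insert x0 (Z' - {?m})"
  have mZ: "?m \<in> Z'" using Min_in[OF fZ neZ] .
  have tr: "is_tree S'" using qsD(2)[OF qs] .
  obtain v where v: "v \<in> level S' ?m" using qsD(3)[OF qs mZ] by blast
  have tauS: "\<tau> \<in> S'" using v comp lt compat_same by fastforce
  have tauL: "\<tau> \<in> level S' ?m" using tauS lt by simp
  have ext: "\<And>t. t \<in> S' \<Longrightarrow> ?m \<le> length t \<Longrightarrow> prefix \<tau> t" using comp lt compat_ge by metis
  have lev0: "\<And>s. s \<in> level S' x0 \<Longrightarrow> s = take x0 \<tau>"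
  proof -
    fix s assume s: "s \<in> level S' x0"
    then have "prefix s \<tau>" using comp compat_le lt x0 by fastforce
    then show "s = take x0 \<tau>" using s by (metis level_iff prefix_def append_eq_conv_conj)
  qed
  have t0: "take x0 \<tau> \<in> level S' x0" using tauS tr tree_pref take_is_prefix lt x0 by fastforce
  have cons: "\<And>x x'. consec ?Z x x' \<Longrightarrow> (x = x0 \<and> consec Z' ?m x') \<or> (x \<noteq> x0 \<and> consec Z' x x')"
  proof -
    fix x x' assume c: "consec ?Z x x'"
    have xZ: "x \<in> ?Z" and x'Z: "x' \<in> ?Z" and xx: "x < x'" and nb: "\<forall>w\<in>?Z. \<not> (x < w \<and> w < x')"
      using c unfolding consec_def by auto
    have ge: "\<And>w. w \<in> Z' \<Longrightarrow> ?m \<le> w" using fZ by auto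
    have "x0 \<le> x" using xZ x0 ge[of x] by force
    then have x'1: "x' \<in> Z'" "x' \<noteq> ?m" using x'Z xx by auto
    then have mx': "?m < x'" using ge le_neq_implies_less by metis
    show "(x = x0 \<and> consec Z' ?m x') \<or> (x \<noteq> x0 \<and> consec Z' x x')"
    proof (cases "x = x0")
      case True
      have "consec Z' ?m x'" unfolding consec_def
      proof (intro conjI ballI)
        fix w assume "w \<in> Z'"
        then show "\<not> (?m < w \<and> w < x')" using nb True x0 by auto
      qed (use mZ x'1 mx' in auto)
      then show ?thesis using True by auto
    next
      case False
      then have x1: "x \<in> Z'" "x \<noteq> ?m" using xZ by auto
      then have mx: "?m < x" using ge le_neq_implies_less by metis
      have "consec Z' x x'" unfolding consec_def
      proof (intro conjI ballI)
        fix w assume "w \<in> Z'"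
        then show "\<not> (x < w \<and> w < x')" using nb mx by auto
      qed (use x1 x'1 xx in auto)
      then show ?thesis using False by auto
    qed
  qed
  have qsZ: "quasistrong ?Z S'" unfolding quasistrong_def
  proof (intro conjI allI impI ballI)
    show "finite S'" "is_tree S'" using qsD(1,2)[OF qs] by auto
    fix x assume "x \<in> ?Z"
    then show "level S' x \<noteq> {}" using t0 qsD(3)[OF qs] by blast
  next
    fix x x' s assume c: "consec ?Z x x'" and s: "s \<in> level S' x"
    from cons[OF c]
    show "\<exists>t1 t2. t1 \<in> level S' x' \<and> t2 \<in> level S' x' \<and> prefix s t1 \<and> prefix s t2 \<and>
                    \<not> compatible t1 t2 \<and> {t\<in>level S' x'. prefix s t} = {t1, t2}"
    proof
      assume a: "x = x0 \<and> consec Z' ?m x'"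
      then have sdef: "s = take x0 \<tau>" using lev0 s by auto
      have st: "prefix s \<tau>" using sdef take_is_prefix by auto
      have mx': "?m < x'" using a unfolding consec_def by auto
      obtain t1 t2 where tt: "t1 \<in> level S' x'" "t2 \<in> level S' x'" "prefix \<tau> t1" "prefix \<tau> t2"
        "\<not> compatible t1 t2" "{t\<in>level S' x'. prefix \<tau> t} = {t1, t2}"
        using qsD(4)[OF qs _ tauL] a by blast
      have "{t\<in>level S' x'. prefix s t} = {t\<in>level S' x'. prefix \<tau> t}"
        using ext mx' st prefix_order.order_trans by fastforce
      then show ?thesis using tt st prefix_order.order_trans by metis
    next
      assume "x \<noteq> x0 \<and> consec Z' x x'"
      then show ?thesis using qsD(4)[OF qs _ s] by blast
    qed
  qed
  have phZ: "prehom_c C c ?Z S'" unfolding prehom_c_def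
  proof (intro allI impI ballI)
    fix x x' s t assume c: "consec ?Z x x'" and s: "s \<in> level S' x" and t: "t \<in> level S' x'"
      and st: "prefix s t"
    from cons[OF c]
    show "\<exists>z. prefix s z \<and> prefix z t \<and> C z = c"
    proof
      assume a: "x = x0 \<and> consec Z' ?m x'"
      then have sdef: "s = take x0 \<tau>" using lev0 s by auto
      have mx': "?m < x'" using a unfolding consec_def by auto
      have "prefix \<tau> t" using ext t mx' by auto
      then obtain z where z: "prefix \<tau> z" "prefix z t" "C z = c"
        using ph a tauL t unfolding prehom_c_def by blast
      have "prefix s z" using sdef z(1) take_is_prefix prefix_order.order_trans by metis
      then show ?thesis using z by blast
    next
      assume "x \<noteq> x0 \<and> consec Z' x x'"
      then show ?thesis using ph s t st unfolding prehom_c_def by blast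
    qed
  qed
  show ?thesis using qsZ phZ by blast
qed

lemma card_lift:
  assumes "finite Z'" "Z' \<noteq> {}" "x0 \<le> Min Z'"
  shows "card (insert x0 (Z' - {Min Z'})) = card Z'"
proof (cases "x0 = Min Z'")
  case True
  then have "insert x0 (Z' - {Min Z'}) = Z'" using Min_in[OF assms(1,2)] by auto
  then show ?thesis by simp
next
  case False
  have "x0 \<notin> Z'"
  proof
    assume "x0 \<in> Z'"
    then have "Min Z' \<le> x0" using assms(1) by simp
    then show False using False assms(3) by simp
  qed
  then have "card (insert x0 (Z' - {Min Z'})) = Suc (card (Z' - {Min Z'}))" using assms(1) by simp
  also have "\<dots> = card Z'" using Min_in[OF assms(1,2)] assms(1,2)
    by (simp add: card_Diff_singleton) (metis card_0_eq Suc_pred neq0_conv)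
  finally show ?thesis .
qed

lemma cone:
  assumes qs: "quasistrong X T" and fin: "finite X" and tau: "\<tau> \<in> T" "length \<tau> \<in> X"
    and y: "y \<in> X" "length \<tau> \<le> y"
  shows "quasistrong {z\<in>X. length \<tau> \<le> z \<and> z \<le> y} {t\<in>T. compatible t \<tau>}"
  unfolding quasistrong_def
proof (intro conjI allI impI ballI)
  let ?X = "{z\<in>X. length \<tau> \<le> z \<and> z \<le> y}"
  let ?T = "{t\<in>T. compatible t \<tau>}"
  have tr: "is_tree T" using qsD(2)[OF qs] .
  show "finite ?T" using qsD(1)[OF qs] by auto
  show "is_tree ?T" unfolding is_tree_def
  proof (intro ballI allI impI)
    fix s t assume s: "s \<in> ?T" and ts: "prefix t s"
    have "t \<in> T" using s ts tr tree_pref by blast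
    moreover have "compatible t \<tau>" using s ts unfolding compatible_def
      by (metis mem_Collect_eq prefix_order.order_trans prefix_same_cases)
    ultimately show "t \<in> ?T" by blast
  qed
  fix x assume x: "x \<in> ?X"
  have tl: "\<tau> \<in> level T (length \<tau>)" using tau by simp
  obtain t where "t \<in> level T x" "prefix \<tau> t" using ext1[OF qs fin tau(2) _ _ tl, of x] x by auto
  then show "level ?T x \<noteq> {}" unfolding compatible_def by auto
next
  let ?X = "{z\<in>X. length \<tau> \<le> z \<and> z \<le> y}"
  let ?T = "{t\<in>T. compatible t \<tau>}"
  fix x x' s assume c: "consec ?X x x'" and s: "s \<in> level ?T x"
  have cX: "consec X x x'" using c unfolding consec_def by auto
  have xt: "length \<tau> \<le> x" using c unfolding consec_def by auto
  have ts: "prefix \<tau> s" using s xt compat_ge by auto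
  obtain t1 t2 where tt: "t1 \<in> level T x'" "t2 \<in> level T x'" "prefix s t1" "prefix s t2"
    "\<not> compatible t1 t2" "{t\<in>level T x'. prefix s t} = {t1, t2}"
    using qsD(4)[OF qs cX, of s] s by auto
  have cpt: "\<And>t. prefix s t \<Longrightarrow> compatible t \<tau>" using ts unfolding compatible_def
    using prefix_order.order_trans by blast
  have "{t\<in>level ?T x'. prefix s t} = {t\<in>level T x'. prefix s t}" using cpt by auto
  then show "\<exists>t1 t2. t1 \<in> level ?T x' \<and> t2 \<in> level ?T x' \<and> prefix s t1 \<and> prefix s t2 \<and>
                    \<not> compatible t1 t2 \<and> {t\<in>level ?T x'. prefix s t} = {t1, t2}"
    using tt cpt by auto
qed

definition cok :: "(bool list \<Rightarrow> nat) \<Rightarrow> nat set \<Rightarrow> nat set \<Rightarrow> bool list set \<Rightarrow> bool" where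
  "cok C K X T \<longleftrightarrow> (\<forall>t\<in>T. \<forall>w\<in>level T (Max X). Min X \<le> length t \<longrightarrow> prefix t w \<longrightarrow> C t \<in> K)"

lemma cok_empty:
  assumes "quasistrong X T" "finite X" "X \<noteq> {}" "cok C {} X T"
  shows False
proof -
  have m: "Min X \<in> X" "Max X \<in> X" "Min X \<le> Max X" using assms(2,3) by auto
  obtain v where v: "v \<in> level T (Min X)" using qsD(3)[OF assms(1) m(1)] by blast
  obtain w where "w \<in> level T (Max X)" "prefix v w" using ext1[OF assms(1,2) m v] by blast
  then show False using assms(4) v unfolding cok_def by auto
qed

lemma ff_pos: "1 \<le> n \<Longrightarrow> 1 \<le> ff k n"
  by (induction k) auto

lemma ST:
  "\<forall>K X T n. finite K \<longrightarrow> card K \<le> k \<longrightarrow> quasistrong X T \<longrightarrow> finite X \<longrightarrow> X \<noteq> {} \<longrightarrow>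
     cok C K X T \<longrightarrow> 1 \<le> n \<longrightarrow> ff k n \<le> card X \<longrightarrow>
     (\<exists>Z S c. Z \<subseteq> X \<and> card Z = n \<and> Min Z = Min X \<and> S \<subseteq> T \<and> quasistrong Z S \<and> prehom_c C c Z S)"
proof (induction k)
  case 0
  show ?case
  proof (intro allI impI)
    fix K X T n assume a: "finite K" "card K \<le> 0" "quasistrong X T" "finite X" "X \<noteq> {}" "cok C K X T"
    then have "K = {}" by auto
    then show "\<exists>Z S c. Z \<subseteq> X \<and> card Z = n \<and> Min Z = Min X \<and> S \<subseteq> T \<and> quasistrong Z S \<and> prehom_c C c Z S"
      using cok_empty[OF a(3,4,5)] a(6) by blast
  qed
next
  case (Suc k)
  show ?case
  proof (intro allI impI)
    fix K X T n assume fK: "finite K" and cK: "card K \<le> Suc k" and qs: "quasistrong X T"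
      and fin: "finite X" and ne: "X \<noteq> {}" and ok: "cok C K X T" and n1: "1 \<le> n"
      and big: "ff (Suc k) n \<le> card X"
    have Kne: "K \<noteq> {}" using cok_empty[OF qs fin ne] ok by blast
    then obtain c where cK': "c \<in> K" by blast
    define D where "D = ff k n"
    have D1: "1 \<le> D" using ff_pos[OF n1] unfolding D_def .
    show "\<exists>Z S c. Z \<subseteq> X \<and> card Z = n \<and> Min Z = Min X \<and> S \<subseteq> T \<and> quasistrong Z S \<and> prehom_c C c Z S"
    proof (cases "dense C c D X T")
      case True
      have "(n - 1) * D \<le> n * D" by simp
      moreover have "ff (Suc k) n = n * D + n" unfolding D_def by (simp add: algebra_simps)
      ultimately have "1 + (n - 1) * D \<le> card X" using big n1 by linarith
      from dense_constr[OF qs fin ne True D1 this]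
      obtain Z S where "Z \<subseteq> X" "card Z = Suc (n - 1)" "Min Z = Min X" "S \<subseteq> T"
        "quasistrong Z S" "prehom_c C c Z S" by blast
      then show ?thesis using n1 by (intro exI[of _ Z] exI[of _ S] exI[of _ c]) auto
    next
      case False
      then obtain \<tau> y where tau: "\<tau> \<in> T" "y \<in> X" "length \<tau> \<in> X" "length \<tau> \<le> y"
        "D \<le> card {z\<in>X. length \<tau> \<le> z \<and> z \<le> y}"
        and nd: "\<not> (\<exists>w\<in>T. length w = y \<and> prefix \<tau> w \<and> (\<exists>z. prefix \<tau> z \<and> prefix z w \<and> C z = c))"
        unfolding dense_def by blast
      define X' where "X' = {z\<in>X. length \<tau> \<le> z \<and> z \<le> y}"
      define T' where "T' = {t\<in>T. compatible t \<tau>}"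
      have qs': "quasistrong X' T'" unfolding X'_def T'_def using cone[OF qs fin tau(1,3,2,4)] .
      have fX': "finite X'" unfolding X'_def using fin by auto
      have tX': "length \<tau> \<in> X'" unfolding X'_def using tau by auto
      then have neX': "X' \<noteq> {}" by auto
      have minX': "Min X' = length \<tau>" using fX' tX' unfolding X'_def by (intro Min_eqI) auto
      have yX': "y \<in> X'" unfolding X'_def using tau by auto
      have maxX': "Max X' = y" using fX' yX' unfolding X'_def by (intro Max_eqI) auto
      have ok': "cok C (K - {c}) X' T'" unfolding cok_def
      proof (intro ballI impI)
        fix t w assume t: "t \<in> T'" and w: "w \<in> level T' (Max X')" and tl: "Min X' \<le> length t"
          and tw: "prefix t w"
        have tt: "prefix \<tau> t" using t tl minX' compat_ge unfolding T'_def by auto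
        have "prefix \<tau> w" using tt tw prefix_order.order_trans by blast
        then have "C t \<noteq> c" using nd w maxX' tt tw unfolding T'_def by auto
        moreover have "C t \<in> K"
        proof -
          have m: "y \<in> X" "Max X \<in> X" "y \<le> Max X" using tau fin ne by auto
          have wl: "w \<in> level T y" using w maxX' unfolding T'_def by auto
          obtain w' where w': "w' \<in> level T (Max X)" "prefix w w'" using ext1[OF qs fin m wl] by blast
          have "Min X \<le> length \<tau>" using tau fin by auto
          then have "Min X \<le> length t" using tl minX' by linarith
          then show ?thesis using ok w' tw t prefix_order.order_trans unfolding cok_def T'_def by blast
        qed
        ultimately show "C t \<in> K - {c}" by blast
      qed
      have cK'': "card (K - {c}) \<le> k" using cK cK' fK by simp
      have big': "ff k n \<le> card X'" using tau(5) unfolding D_def X'_def .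
      obtain Z' S' c' where ZS: "Z' \<subseteq> X'" "card Z' = n" "Min Z' = Min X'" "S' \<subseteq> T'"
        "quasistrong Z' S'" "prehom_c C c' Z' S'"
        using Suc.IH[rule_format, OF _ cK'' qs' fX' neX' ok' n1 big'] fK by blast
      have fZ': "finite Z'" using ZS(1) fX' finite_subset by blast
      have neZ': "Z' \<noteq> {}" using ZS(2) n1 by auto
      have comp: "\<forall>s\<in>S'. compatible s \<tau>" using ZS(4) unfolding T'_def by auto
      have x0: "Min X \<le> Min Z'" using ZS(3) minX' tau fin by auto
      have lt: "length \<tau> = Min Z'" using ZS(3) minX' by simp
      define Z where "Z = insert (Min X) (Z' - {Min Z'})"
      have res: "quasistrong Z S' \<and> prehom_c C c' Z S'"
        using top_lift[OF ZS(5) fZ' neZ' comp lt x0 ZS(6)] unfolding Z_def .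
      have cZ: "card Z = n" using card_lift[OF fZ' neZ' x0] ZS(2) unfolding Z_def by simp
      have ZX: "Z \<subseteq> X" using ZS(1) fin ne unfolding Z_def X'_def by auto
      have mZ: "Min Z = Min X"
      proof (rule Min_eqI)
        show "finite Z" unfolding Z_def using fZ' by auto
        show "Min X \<in> Z" unfolding Z_def by auto
        fix z assume "z \<in> Z" then show "Min X \<le> z" using ZX fin by auto
      qed
      have "S' \<subseteq> T" using ZS(4) unfolding T'_def by auto
      then show ?thesis using res cZ ZX mZ by blast
    qed
  qed
qed

lemma multi:
  assumes fR: "finite R"
  shows "\<forall>n (X::nat set). 1 \<le> n \<longrightarrow> finite X \<longrightarrow> X \<noteq> {} \<longrightarrow> (ff k ^^ card R) n \<le> card X \<longrightarrow>
     (\<forall>\<rho>\<in>R. quasistrong X (T \<rho>) \<and> (\<forall>s\<in>T \<rho>. C s < k)) \<longrightarrow>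
     (\<exists>Z S. Z \<subseteq> X \<and> card Z = n \<and> Min Z = Min X \<and>
        (\<forall>\<rho>\<in>R. S \<rho> \<subseteq> T \<rho> \<and> quasistrong Z (S \<rho>) \<and> prehomogeneous C Z (S \<rho>)))"
  using fR
proof (induction R rule: finite_induct)
  case empty
  show ?case
  proof (intro allI impI)
    fix n and X :: "nat set" assume n1: "1 \<le> (n::nat)" and fin: "finite X" and ne: "X \<noteq> {}"
      and big: "(ff k ^^ card {}) n \<le> card X"
    then obtain y where y: "y \<in> X" "card {z\<in>X. z \<le> y} = n" using pick[OF fin n1] by auto
    let ?Z = "{z\<in>X. z \<le> y}"
    have "Min ?Z = Min X"
    proof (rule Min_eqI)
      show "finite ?Z" using fin by auto
      show "Min X \<in> ?Z" using fin ne y by auto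
      fix z assume "z \<in> ?Z" then show "Min X \<le> z" using fin by auto
    qed
    then show "\<exists>Z S. Z \<subseteq> X \<and> card Z = n \<and> Min Z = Min X \<and>
        (\<forall>\<rho>\<in>{}. S \<rho> \<subseteq> T \<rho> \<and> quasistrong Z (S \<rho>) \<and> prehomogeneous C Z (S \<rho>))"
      using y by (intro exI[of _ ?Z]) auto
  qed
next
  case (insert \<rho> R)
  show ?case
  proof (intro allI impI)
    fix n and X :: "nat set" assume n1: "1 \<le> (n::nat)" and fin: "finite X" and ne: "X \<noteq> {}"
      and big: "(ff k ^^ card (insert \<rho> R)) n \<le> card X"
      and hyp: "\<forall>\<sigma>\<in>insert \<rho> R. quasistrong X (T \<sigma>) \<and> (\<forall>s\<in>T \<sigma>. C s < k)"
    have "(ff k ^^ card (insert \<rho> R)) n = (ff k ^^ card R) (ff k n)"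
      using insert.hyps by (simp add: funpow_swap1)
    then have big': "(ff k ^^ card R) (ff k n) \<le> card X" using big by simp
    obtain Z1 S1 where Z1: "Z1 \<subseteq> X" "card Z1 = ff k n" "Min Z1 = Min X"
      "\<forall>\<sigma>\<in>R. S1 \<sigma> \<subseteq> T \<sigma> \<and> quasistrong Z1 (S1 \<sigma>) \<and> prehomogeneous C Z1 (S1 \<sigma>)"
      using insert.IH[rule_format, OF ff_pos[OF n1] fin ne big'] hyp by blast
    have fZ1: "finite Z1" using Z1(1) fin finite_subset by blast
    have neZ1: "Z1 \<noteq> {}" using Z1(2) ff_pos[OF n1, of k] by auto
    obtain T' where T': "T' \<subseteq> T \<rho>" "quasistrong Z1 T'"
      using restrict[OF _ fin fZ1 neZ1 Z1(1), of "T \<rho>"] hyp by blast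
    have ck: "card {..<k} \<le> k" by simp
    have bigZ: "ff k n \<le> card Z1" using Z1(2) by simp
    have ok: "cok C {..<k} Z1 T'" unfolding cok_def
    proof (intro ballI impI)
      fix t w assume "t \<in> T'"
      then have "t \<in> T \<rho>" using T'(1) by blast
      then have "C t < k" using hyp by blast
      then show "C t \<in> {..<k}" by simp
    qed
    obtain Z S0 c where Z: "Z \<subseteq> Z1" "card Z = n" "Min Z = Min Z1" "S0 \<subseteq> T'"
      "quasistrong Z S0" "prehom_c C c Z S0"
      using ST[where k=k and C=C, rule_format, OF finite_lessThan ck T'(2) fZ1 neZ1 ok n1 bigZ] by blast
    have fZ: "finite Z" using Z(1) fZ1 finite_subset by blast
    have neZ: "Z \<noteq> {}" using Z(2) n1 by auto
    have "\<forall>\<sigma>\<in>R. \<exists>S2. S2 \<subseteq> T \<sigma> \<and> quasistrong Z S2 \<and> prehomogeneous C Z S2"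
    proof
      fix \<sigma> assume s: "\<sigma> \<in> R"
      then have q: "quasistrong Z1 (S1 \<sigma>)" "prehomogeneous C Z1 (S1 \<sigma>)" "S1 \<sigma> \<subseteq> T \<sigma>"
        using Z1(4) by auto
      obtain c' where c': "prehom_c C c' Z1 (S1 \<sigma>)" using prehom_imp_c[OF q(2)] by blast
      obtain S2 where S2: "S2 \<subseteq> S1 \<sigma>" "quasistrong Z S2"
        using restrict[OF q(1) fZ1 fZ neZ Z(1)] by blast
      have "prehom_c C c' Z S2" using prehom_restrict[OF q(1) fZ1 c' S2(1) Z(1)] .
      then have "prehomogeneous C Z S2" using prehom_c_imp qsD(2)[OF S2(2)] by blast
      then show "\<exists>S2. S2 \<subseteq> T \<sigma> \<and> quasistrong Z S2 \<and> prehomogeneous C Z S2"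
        using S2 q(3) by blast
    qed
    from bchoice[OF this] obtain F where F: "\<forall>\<sigma>\<in>R. F \<sigma> \<subseteq> T \<sigma> \<and> quasistrong Z (F \<sigma>) \<and> prehomogeneous C Z (F \<sigma>)"
      by blast
    have new1: "S0 \<subseteq> T \<rho>" using Z(4) T'(1) by (rule subset_trans)
    have new3: "prehomogeneous C Z S0" by (rule prehom_c_imp[OF qsD(2)[OF Z(5)] Z(6)])
    let ?S = "\<lambda>\<sigma>. if \<sigma> = \<rho> then S0 else F \<sigma>"
    have all: "\<forall>\<sigma>\<in>insert \<rho> R. ?S \<sigma> \<subseteq> T \<sigma> \<and> quasistrong Z (?S \<sigma>) \<and> prehomogeneous C Z (?S \<sigma>)"
    proof
      fix \<sigma> assume s: "\<sigma> \<in> insert \<rho> R"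
      show "?S \<sigma> \<subseteq> T \<sigma> \<and> quasistrong Z (?S \<sigma>) \<and> prehomogeneous C Z (?S \<sigma>)"
      proof (cases "\<sigma> = \<rho>")
        case True
        then have "?S \<sigma> = S0" by simp
        then show ?thesis using new1 Z(5) new3 True by simp
      next
        case False
        then have "\<sigma> \<in> R" using s by blast
        moreover have "?S \<sigma> = F \<sigma>" using False by simp
        ultimately show ?thesis using F by metis
      qed
    qed
    have ZX: "Z \<subseteq> X" using Z(1) Z1(1) by blast
    have mZ: "Min Z = Min X" using Z(3) Z1(3) by simp
    show "\<exists>Z S. Z \<subseteq> X \<and> card Z = n \<and> Min Z = Min X \<and>
        (\<forall>\<sigma>\<in>insert \<rho> R. S \<sigma> \<subseteq> T \<sigma> \<and> quasistrong Z (S \<sigma>) \<and> prehomogeneous C Z (S \<sigma>))"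
      apply (rule exI[of _ Z], rule exI[of _ ?S])
      using ZX Z(2) mZ all by blast
  qed
qed

lemma card_strings: "finite {\<rho>::bool list. length \<rho> = a} \<and> card {\<rho>::bool list. length \<rho> = a} = 2 ^ a"
  using finite_lists_length_eq[of "UNIV::bool set" a] card_lists_length_eq[of "UNIV::bool set" a]
  by simp

theorem lemma2p17:
  shows "\<exists>hbar. primrec3 hbar \<and>
    (\<forall>(n::nat) (k::nat) (X::nat set) (T::bool list \<Rightarrow> bool list set) (C::bool list \<Rightarrow> nat).
       n \<ge> 1 \<and> finite X \<and> X \<noteq> {} \<and>
       card X \<ge> hbar (Min X) n k \<and>
       (\<forall>\<rho>. length \<rho> = Min X \<longrightarrow>
           quasistrong X (T \<rho>) \<and> (\<forall>s\<in>T \<rho>. compatible s \<rho>)) \<and>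
       (\<forall>\<rho>. length \<rho> = Min X \<longrightarrow> (\<forall>s\<in>T \<rho>. C s < k))
     \<longrightarrow>
       (\<exists>Z S. Z \<subseteq> X \<and> card Z = n \<and> Min Z = Min X \<and>
          (\<forall>\<rho>. length \<rho> = Min X \<longrightarrow>
             S \<rho> \<subseteq> T \<rho> \<and> quasistrong Z (S \<rho>) \<and> prehomogeneous C Z (S \<rho>))))"
proof (intro exI[of _ hb] conjI primrec3_hb allI impI)
  fix n k :: nat and X T and C :: "bool list \<Rightarrow> nat"
  assume a: "n \<ge> 1 \<and> finite X \<and> X \<noteq> {} \<and>
       card X \<ge> hb (Min X) n k \<and>
       (\<forall>\<rho>. length \<rho> = Min X \<longrightarrow>
           quasistrong X (T \<rho>) \<and> (\<forall>s\<in>T \<rho>. compatible s \<rho>)) \<and>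
       (\<forall>\<rho>. length \<rho> = Min X \<longrightarrow> (\<forall>s\<in>T \<rho>. C s < k))"
  have n1: "1 \<le> n" and fin: "finite X" and ne: "X \<noteq> {}" and big: "hb (Min X) n k \<le> card X"
    and q: "\<forall>\<rho>. length \<rho> = Min X \<longrightarrow> quasistrong X (T \<rho>)"
    and cl: "\<forall>\<rho>. length \<rho> = Min X \<longrightarrow> (\<forall>s\<in>T \<rho>. C s < k)"
    using a by blast+
  let ?R = "{\<rho>::bool list. length \<rho> = Min X}"
  have R: "finite ?R" "card ?R = 2 ^ Min X" using card_strings by blast+
  have big': "(ff k ^^ card ?R) n \<le> card X" using big R(2) unfolding hb_def by metis
  have hyp: "\<forall>\<rho>\<in>?R. quasistrong X (T \<rho>) \<and> (\<forall>s\<in>T \<rho>. C s < k)" using q cl by blast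
  obtain Z S where "Z \<subseteq> X" "card Z = n" "Min Z = Min X"
     "\<forall>\<rho>\<in>?R. S \<rho> \<subseteq> T \<rho> \<and> quasistrong Z (S \<rho>) \<and> prehomogeneous C Z (S \<rho>)"
    using multi[OF R(1), of k T C, rule_format, OF n1 fin ne big'] hyp by blast
  then show "\<exists>Z S. Z \<subseteq> X \<and> card Z = n \<and> Min Z = Min X \<and>
          (\<forall>\<rho>. length \<rho> = Min X \<longrightarrow>
             S \<rho> \<subseteq> T \<rho> \<and> quasistrong Z (S \<rho>) \<and> prehomogeneous C Z (S \<rho>))" by blast
qed

end
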